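(* Let $1\le p<\infty$ and let $f$ be a continuous real function on $[0,1]$. Then there are constants $0<c_1\le c_2$, independent of $f$ and $t$, such that for all $0<t\le 1$, $$c_1\, t\,\upsilon_p\big([t^{-1}]^p,f\big)\le K(f,t;L^\infty,BV_p)\le c_2\, t\,\upsilon_p\big([t^{-1}]^p,f\big),$$ where $[x]$ denotes the integer part of $x$.
   Context: For a function $f$ on $[0,1]$ and a positive integer $n$, the modulus of $p$-variation is $\upsilon_p(n,f)=\sup\big(\sum_{j=1}^n|f(I_j)|^p\big)^{1/p}$, the supremum over all collections $\{I_j\}_{j=1}^n$ of nonoverlapping subintervals of $[0,1]$, where $f(I)=f(\sup I)-f(\inf I)$. The $p$-variation is $\mathrm{Var}_p(g)=\sup\big(\sum_j|g(I_j)|^p\big)^{1/p}$, the supremum over all finite collections of nonoverlapping subintervals of $[0,1]$, and $BV_p$ is the space of functions on $[0,1]$ with $\mathrm{Var}_p(g)<\infty$. The $K$-functional is $K(f,t;L^\infty,BV_p)=\inf_{g\in BV_p}\big(\|f-g\|_{L^\infty}+t\,\mathrm{Var}_p(g)\big)$. *)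

theory Defs
  imports "HOL-Analysis.Analysis"
begin

definition nonoverlapping_family :: "nat \<Rightarrow> (nat \<Rightarrow> real) \<Rightarrow> (nat \<Rightarrow> real) \<Rightarrow> bool" where
  "nonoverlapping_family n a b \<longleftrightarrow>
     (\<forall>j<n. 0 \<le> a j \<and> a j \<le> b j \<and> b j \<le> 1) \<and>
     (\<forall>i<n. \<forall>j<n. i \<noteq> j \<longrightarrow> b i \<le> a j \<or> b j \<le> a i)"

definition psums :: "real \<Rightarrow> nat \<Rightarrow> (real \<Rightarrow> real) \<Rightarrow> real set" where
  "psums p n f = {(\<Sum>j<n. \<bar>f (b j) - f (a j)\<bar> powr p) | a b. nonoverlapping_family n a b}"

definition modulus_pvar :: "real \<Rightarrow> nat \<Rightarrow> (real \<Rightarrow> real) \<Rightarrow> real" where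
  "modulus_pvar p n f = (Sup (psums p n f)) powr (1 / p)"

definition BVp :: "real \<Rightarrow> (real \<Rightarrow> real) set" where
  "BVp p = {g. bdd_above (\<Union>n. psums p n g)}"

text \<open>p-variation Var_p(g) (meaningful for g in BV_p).\<close>
definition pvar :: "real \<Rightarrow> (real \<Rightarrow> real) \<Rightarrow> real" where
  "pvar p g = (Sup (\<Union>n. psums p n g)) powr (1 / p)"

definition Linf_norm :: "(real \<Rightarrow> real) \<Rightarrow> real" where
  "Linf_norm h = Inf {M. 0 \<le> M \<and> (AE x in lebesgue. x \<in> {0..1} \<longrightarrow> \<bar>h x\<bar> \<le> M)}"

definition K_func :: "real \<Rightarrow> (real \<Rightarrow> real) \<Rightarrow> real \<Rightarrow> real" where
  "K_func p f t = Inf {Linf_norm (\<lambda>x. f x - g x) + t * pvar p g | g. g \<in> BVp p}"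

end

theory Submission
  imports Defs
begin

lemma powr_sum_le:
  fixes A B p :: real
  assumes "0 \<le> A" "0 \<le> B" "0 < p"
  shows "(A + B) powr p \<le> 2 powr p * (A powr p + B powr p)"
proof -
  have "(A + B) powr p \<le> (2 * max A B) powr p"
    using assms by (intro powr_mono2) auto
  also have "\<dots> = 2 powr p * (max A B) powr p"
    using assms by (simp add: powr_mult)
  also have "\<dots> \<le> 2 powr p * (A powr p + B powr p)"
    using assms by (intro mult_left_mono) (auto simp: max_def)
  finally show ?thesis .
qed

lemma root_sum_le:
  fixes X Y p :: real
  assumes "0 \<le> X" "0 \<le> Y" "1 \<le> p"
  shows "(X + Y) powr (1/p) \<le> 2 * (X powr (1/p) + Y powr (1/p))"
proof -
  have "(X + Y) powr (1/p) \<le> 2 powr (1/p) * (X powr (1/p) + Y powr (1/p))"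
    using assms by (intro powr_sum_le) auto
  also have "\<dots> \<le> 2 powr 1 * (X powr (1/p) + Y powr (1/p))"
    using assms by (intro mult_right_mono powr_mono) auto
  finally show ?thesis by simp
qed

lemma zero_family: "nonoverlapping_family n (\<lambda>_. 0) (\<lambda>_. 0)"
  by (simp add: nonoverlapping_family_def)

lemma zero_in_psums: "0 \<in> psums p n f"
proof -
  have "0 = (\<Sum>j<n. \<bar>f ((\<lambda>_. 0::real) j) - f ((\<lambda>_. 0) j)\<bar> powr p)" by simp
  then show ?thesis unfolding psums_def using zero_family[of n] by fastforce
qed

lemma psums_bdd:
  assumes "continuous_on {0..1} f" "0 < p"
  shows "bdd_above (psums p n f)"
proof -
  have "compact (f ` {0..1})" using assms compact_continuous_image by blast
  then obtain M where M: "\<And>x. x \<in> {0..1} \<Longrightarrow> \<bar>f x\<bar> \<le> M"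
    using compact_imp_bounded bounded_iff by (metis image_eqI real_norm_def)
  have "s \<le> real n * max 1 ((2*M) powr p)" if "s \<in> psums p n f" for s
  proof -
    obtain a b where ab: "nonoverlapping_family n a b" and s: "s = (\<Sum>j<n. \<bar>f (b j) - f (a j)\<bar> powr p)"
      using \<open>s \<in> psums p n f\<close> unfolding psums_def by blast
    have "\<bar>f (b j) - f (a j)\<bar> powr p \<le> max 1 ((2*M) powr p)" if "j < n" for j
    proof -
      have "a j \<in> {0..1}" "b j \<in> {0..1}" using ab that unfolding nonoverlapping_family_def by auto
      then have "\<bar>f (b j) - f (a j)\<bar> \<le> 2*M" using M by (smt (verit))
      then have "\<bar>f (b j) - f (a j)\<bar> powr p \<le> (2*M) powr p \<or> \<bar>f (b j) - f (a j)\<bar> powr p \<le> 1"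
        using assms(2) by (auto intro: powr_mono2)
      then show ?thesis by linarith
    qed
    then have "s \<le> (\<Sum>j<n. max 1 ((2*M) powr p))" unfolding s by (intro sum_mono) auto
    then show ?thesis by simp
  qed
  then show ?thesis unfolding bdd_above_def by blast
qed

lemma pad_family:
  assumes ab: "nonoverlapping_family n a b" and J: "J \<subseteq> {..<n}" and cJ: "card J \<le> N"
  shows "(\<Sum>j\<in>J. \<bar>f (b j) - f (a j)\<bar> powr p) \<in> psums p N f"
proof -
  have fJ: "finite J" using J finite_subset by blast
  obtain e where e: "bij_betw e {..<card J} J"
    using finite_same_card_bij[of "{..<card J}" J] fJ by auto
  define a' where "a' k = (if k < card J then a (e k) else 0)" for k
  define b' where "b' k = (if k < card J then b (e k) else 0)" for k
  have ejn: "e k \<in> J" if "k < card J" for k using e that bij_betwE by blast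
  have nf: "nonoverlapping_family N a' b'"
    unfolding nonoverlapping_family_def
  proof (rule conjI; intro allI impI)
    fix j assume "j < N"
    show "0 \<le> a' j \<and> a' j \<le> b' j \<and> b' j \<le> 1"
    proof (cases "j < card J")
      case True
      then have "e j < n" using ejn J by auto
      then show ?thesis using True ab unfolding a'_def b'_def nonoverlapping_family_def by auto
    next
      case False
      then show ?thesis by (simp add: a'_def b'_def)
    qed
  next
    fix i j assume "i < N" "j < N" "i \<noteq> j"
    show "b' i \<le> a' j \<or> b' j \<le> a' i"
    proof (cases "i < card J \<and> j < card J")
      case True
      then have "e i \<noteq> e j" using e \<open>i \<noteq> j\<close> unfolding bij_betw_def inj_on_def by auto
      moreover have "e i < n" "e j < n" using True ejn J by auto
      ultimately have "b (e i) \<le> a (e j) \<or> b (e j) \<le> a (e i)"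
        using ab unfolding nonoverlapping_family_def by blast
      then show ?thesis using True unfolding a'_def b'_def by simp
    next
      case False
      have a0: "0 \<le> a' k" for k
      proof (cases "k < card J")
        case True
        then have "e k < n" using ejn J by auto
        then show ?thesis using True ab unfolding a'_def nonoverlapping_family_def by auto
      next
        case False
        then show ?thesis by (simp add: a'_def)
      qed
      from False have "b' i = 0 \<or> b' j = 0" unfolding b'_def by auto
      then show ?thesis using a0[of i] a0[of j] by auto
    qed
  qed
  have "(\<Sum>k<N. \<bar>f (b' k) - f (a' k)\<bar> powr p) = (\<Sum>k<card J. \<bar>f (b' k) - f (a' k)\<bar> powr p)"
  proof -
    have "(\<Sum>k<N. \<bar>f (b' k) - f (a' k)\<bar> powr p) = (\<Sum>k<card J. \<bar>f (b' k) - f (a' k)\<bar> powr p)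
       + (\<Sum>k\<in>{card J..<N}. \<bar>f (b' k) - f (a' k)\<bar> powr p)"
      using sum.atLeastLessThan_concat[of 0 "card J" N "\<lambda>k. \<bar>f (b' k) - f (a' k)\<bar> powr p"] cJ by (simp add: lessThan_atLeast0)
    also have "(\<Sum>k\<in>{card J..<N}. \<bar>f (b' k) - f (a' k)\<bar> powr p) = 0"
      unfolding a'_def b'_def by (intro sum.neutral) auto
    finally show ?thesis by simp
  qed
  also have "\<dots> = (\<Sum>k<card J. \<bar>f (b (e k)) - f (a (e k))\<bar> powr p)"
    unfolding a'_def b'_def by simp
  also have "\<dots> = (\<Sum>j\<in>J. \<bar>f (b j) - f (a j)\<bar> powr p)"
    using sum.reindex_bij_betw[OF e, of "\<lambda>j. \<bar>f (b j) - f (a j)\<bar> powr p"] by simp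
  finally have "(\<Sum>j\<in>J. \<bar>f (b j) - f (a j)\<bar> powr p) = (\<Sum>k<N. \<bar>f (b' k) - f (a' k)\<bar> powr p)" by simp
  then show ?thesis unfolding psums_def using nf by blast
qed

lemma Linf_le:
  assumes "0 \<le> M" "\<And>x. x \<in> {0..1} \<Longrightarrow> \<bar>h x\<bar> \<le> M"
  shows "Linf_norm h \<le> M"
  unfolding Linf_norm_def
proof (rule cInf_lower)
  show "M \<in> {M. 0 \<le> M \<and> (AE x in lebesgue. x \<in> {0..1} \<longrightarrow> \<bar>h x\<bar> \<le> M)}"
    using assms by (auto intro!: AE_I2)
  show "bdd_below {M. 0 \<le> M \<and> (AE x in lebesgue. x \<in> {0..1} \<longrightarrow> \<bar>h x\<bar> \<le> M)}"
    unfolding bdd_below_def by auto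
qed

lemma Linf_attained:
  assumes "0 \<le> M" "\<And>x. x \<in> {0..1} \<Longrightarrow> \<bar>h x\<bar> \<le> M"
  shows "0 \<le> Linf_norm h \<and> (AE x in lebesgue. x \<in> {0..1} \<longrightarrow> \<bar>h x\<bar> \<le> Linf_norm h)"
proof -
  define S where "S = {M. 0 \<le> M \<and> (AE x in lebesgue. x \<in> {0..1} \<longrightarrow> \<bar>h x\<bar> \<le> M)}"
  have ne: "S \<noteq> {}" using assms unfolding S_def by (auto intro!: AE_I2)
  have L: "Linf_norm h = Inf S" unfolding Linf_norm_def S_def ..
  have L0: "0 \<le> Inf S" using ne by (intro cInf_greatest) (auto simp: S_def)
  have Hn: "AE x in lebesgue. x \<in> {0..1} \<longrightarrow> \<bar>h x\<bar> \<le> Inf S + 1 / real (Suc n)" for n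
  proof -
    have "Inf S < Inf S + 1 / real (Suc n)" by simp
    then obtain M' where "M' \<in> S" "M' < Inf S + 1 / real (Suc n)" using cInf_lessD[OF ne] by blast
    then have M'1: "AE x in lebesgue. x \<in> {0..1} \<longrightarrow> \<bar>h x\<bar> \<le> M'" unfolding S_def by blast
    show ?thesis
      by (rule AE_mp[OF M'1], rule AE_I2) (use \<open>M' < _\<close> in auto)
  qed
  have "AE x in lebesgue. \<forall>n. x \<in> {0..1} \<longrightarrow> \<bar>h x\<bar> \<le> Inf S + 1 / real (Suc n)"
    unfolding AE_all_countable using Hn by blast
  then have "AE x in lebesgue. x \<in> {0..1} \<longrightarrow> \<bar>h x\<bar> \<le> Inf S"
  proof (rule AE_mp, intro AE_I2 impI)
    fix x assume H: "\<forall>n. x \<in> {0..1} \<longrightarrow> \<bar>h x\<bar> \<le> Inf S + 1 / real (Suc n)" and x: "x \<in> {0..1}"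
    show "\<bar>h x\<bar> \<le> Inf S"
    proof (rule ccontr)
      assume "\<not> \<bar>h x\<bar> \<le> Inf S"
      then obtain n where "inverse (real (Suc n)) < \<bar>h x\<bar> - Inf S"
        using reals_Archimedean[of "\<bar>h x\<bar> - Inf S"] by auto
      moreover have "\<bar>h x\<bar> \<le> Inf S + 1 / real (Suc n)" using H x by blast
      moreover have "inverse (real (Suc n)) = 1 / real (Suc n)" by (rule inverse_eq_divide)
      ultimately show False by linarith
    qed
  qed
  then show ?thesis unfolding L using L0 by blast
qed

lemma AE_dense:
  fixes x e :: real
  assumes "AE x in lebesgue. x \<in> {0..1} \<longrightarrow> P x" "x \<in> {0..1}" "0 < e"
  shows "\<exists>y\<in>{0..1}. \<bar>y - x\<bar> < e \<and> P y"
proof (rule ccontr)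
  assume H: "\<not> ?thesis"
  define u where "u = max 0 (x - e/2)"
  define v where "v = min 1 (x + e/2)"
  have uv: "u < v" using assms unfolding u_def v_def by auto
  have "AE y in lebesgue. y \<notin> {u<..<v}"
  proof (rule AE_mp[OF assms(1)], intro AE_I2 impI)
    fix y assume "y \<in> {0..1} \<longrightarrow> P y"
    show "y \<notin> {u<..<v}"
    proof
      assume "y \<in> {u<..<v}"
      then have "y \<in> {0..1}" "\<bar>y - x\<bar> < e" unfolding u_def v_def by auto
      then show False using H \<open>y \<in> {0..1} \<longrightarrow> P y\<close> by blast
    qed
  qed
  then have "AE y in lborel. y \<notin> {u<..<v}" by (simp add: AE_completion_iff)
  then have "emeasure lborel {u<..<v} = 0"
    by (subst (asm) AE_iff_measurable[of "{u<..<v}"]) auto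
  then show False using uv by simp
qed

lemma cont_bdd:
  assumes "continuous_on {0..1} f"
  shows "\<exists>M. \<forall>x\<in>{0..1::real}. \<bar>f x :: real\<bar> \<le> M"
proof -
  have "compact (f ` {0..1})" using assms compact_continuous_image compact_Icc by blast
  then have "bounded (f ` {0..1})" by (rule compact_imp_bounded)
  then obtain M where "\<forall>y\<in>f ` {0..1}. norm y \<le> M" unfolding bounded_iff by blast
  then show ?thesis by auto
qed

lemma BVp_bdd:
  assumes "g \<in> BVp p" "1 \<le> p"
  shows "\<exists>M. \<forall>x\<in>{0..1}. \<bar>g x\<bar> \<le> M"
proof -
  obtain B where B: "\<And>s. s \<in> (\<Union>n. psums p n g) \<Longrightarrow> s \<le> B"
    using assms unfolding BVp_def bdd_above_def by blast
  have "\<bar>g x\<bar> \<le> \<bar>g 0\<bar> + max 1 B" if x: "x \<in> {0..1}" for x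
  proof -
    have fam: "nonoverlapping_family 1 (\<lambda>_. 0) (\<lambda>_. x)"
      using x unfolding nonoverlapping_family_def by auto
    have "(\<Sum>j<(1::nat). \<bar>g ((\<lambda>_. x) j) - g ((\<lambda>_. 0::real) j)\<bar> powr p) \<in> psums p 1 g"
      unfolding psums_def mem_Collect_eq
        by (rule exI[where x="\<lambda>_. 0::real"], rule exI[where x="\<lambda>_. x"], intro conjI refl fam)
    moreover have "(\<Sum>j<(1::nat). \<bar>g ((\<lambda>_. x) j) - g ((\<lambda>_. 0::real) j)\<bar> powr p) = \<bar>g x - g 0\<bar> powr p"
      by simp
    ultimately have "\<bar>g x - g 0\<bar> powr p \<in> psums p 1 g" by simp
    then have "\<bar>g x - g 0\<bar> powr p \<in> (\<Union>n. psums p n g)" by blast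
    then have "\<bar>g x - g 0\<bar> powr p \<le> B" using B by blast
    moreover have "\<bar>g x - g 0\<bar> \<le> \<bar>g x - g 0\<bar> powr p" if "1 \<le> \<bar>g x - g 0\<bar>"
      using that assms(2) powr_mono[of 1 p "\<bar>g x - g 0\<bar>"] by auto
    ultimately have "\<bar>g x - g 0\<bar> \<le> max 1 B" by (cases "1 \<le> \<bar>g x - g 0\<bar>") auto
    then show ?thesis by linarith
  qed
  then show ?thesis by blast
qed

definition Aset :: "(real \<Rightarrow> real) \<Rightarrow> real \<Rightarrow> real \<Rightarrow> real set" where
  "Aset f d x = {y \<in> {x..1}. d \<le> \<bar>f y - f x\<bar>}"

definition nxt :: "(real \<Rightarrow> real) \<Rightarrow> real \<Rightarrow> real \<Rightarrow> real" where
  "nxt f d x = (if Aset f d x = {} then 2 else Inf (Aset f d x))"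

lemma nxt_props:
  assumes cont: "continuous_on {0..1} f" and d: "0 < d" and x: "x \<in> {0..1}" and ne: "Aset f d x \<noteq> {}"
  shows "nxt f d x \<in> Aset f d x" "x < nxt f d x"
    "\<And>y. x \<le> y \<Longrightarrow> y < nxt f d x \<Longrightarrow> \<bar>f y - f x\<bar> < d"
proof -
  have cl: "closed (Aset f d x)"
  proof -
    have "continuous_on {x..1} f" by (rule continuous_on_subset[OF cont]) (use x in auto)
    then have c2: "continuous_on {x..1} (\<lambda>y. \<bar>f y - f x\<bar>)" by (intro continuous_intros)
    have "closed {y \<in> {x..1}. (\<lambda>_. d) y \<le> (\<lambda>y. \<bar>f y - f x\<bar>) y}"
      by (rule continuous_on_closed_Collect_le[OF continuous_on_const c2]) simp
    then show ?thesis unfolding Aset_def by simp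
  qed
  have bb: "bdd_below (Aset f d x)" unfolding Aset_def bdd_below_def by auto
  have eq: "nxt f d x = Inf (Aset f d x)" using ne unfolding nxt_def by simp
  show mem: "nxt f d x \<in> Aset f d x" unfolding eq using closed_contains_Inf[OF ne bb cl] .
  show "x < nxt f d x"
  proof -
    have "x \<le> nxt f d x" using mem unfolding Aset_def by auto
    moreover have "nxt f d x \<noteq> x" using mem d unfolding Aset_def by auto
    ultimately show ?thesis by simp
  qed
  fix y assume y: "x \<le> y" "y < nxt f d x"
  have "y \<le> 1" using y mem unfolding Aset_def by auto
  have "y \<notin> Aset f d x"
  proof
    assume "y \<in> Aset f d x"
    then have "Inf (Aset f d x) \<le> y" using bb by (rule cInf_lower)
    then show False using y eq by simp
  qed
  then show "\<bar>f y - f x\<bar> < d" using y \<open>y \<le> 1\<close> unfolding Aset_def by auto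
qed

lemma greedy:
  fixes f :: "real \<Rightarrow> real" and d p :: real and N :: nat
  assumes cont: "continuous_on {0..1} f" and d: "0 < d" and p: "1 \<le> p"
    and big: "Sup (psums p N f) < real N * d powr p"
  shows "\<exists>g. g \<in> BVp p \<and> (\<forall>x\<in>{0..1}. \<bar>f x - g x\<bar> \<le> d) \<and>
             Sup (\<Union>n. psums p n g) \<le> Sup (psums p N f)"
proof -
  define X where "X k = (nxt f d ^^ k) 0" for k
  have X0: "X 0 = 0" unfolding X_def by simp
  have XS: "X (Suc k) = nxt f d (X k)" for k unfolding X_def by simp
  define Q where "Q k \<longleftrightarrow> X k \<in> {0..1} \<and> Aset f d (X k) \<noteq> {}" for k
  have step: "X k < X (Suc k) \<and> X (Suc k) \<in> {0..1} \<and> d \<le> \<bar>f (X (Suc k)) - f (X k)\<bar>"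
    if "Q k" for k
  proof -
    have q: "X k \<in> {0..1}" "Aset f d (X k) \<noteq> {}" using that unfolding Q_def by auto
    note np = nxt_props[OF cont d q]
    show ?thesis using np(1,2) q(1) unfolding XS Aset_def by auto
  qed
  have monoQ: "X i \<le> X j" if "i \<le> j" "\<forall>k<j. Q k" for i j
    using that
  proof (induction j)
    case 0 then show ?case by simp
  next
    case (Suc j)
    show ?case
    proof (cases "i = Suc j")
      case True then show ?thesis by simp
    next
      case False
      then have "i \<le> j" using Suc.prems by simp
      then have "X i \<le> X j" using Suc by simp
      moreover have "X j < X (Suc j)" using step Suc.prems by auto
      ultimately show ?thesis by simp
    qed
  qed
  have bddN: "bdd_above (psums p N f)" using psums_bdd[OF cont] p by simp
  have "\<exists>k<N. \<not> Q k"
  proof (rule ccontr)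
    assume "\<not> (\<exists>k<N. \<not> Q k)"
    then have allQ: "\<forall>k<N. Q k" by auto
    have fam: "nonoverlapping_family N X (\<lambda>j. X (Suc j))"
      unfolding nonoverlapping_family_def
    proof (rule conjI; intro allI impI)
      fix j assume "j < N"
      then show "0 \<le> X j \<and> X j \<le> X (Suc j) \<and> X (Suc j) \<le> 1"
        using step[of j] allQ unfolding Q_def by auto
    next
      fix i j assume ij: "i < N" "j < N" "i \<noteq> j"
      show "X (Suc i) \<le> X j \<or> X (Suc j) \<le> X i"
      proof (cases "i < j")
        case True
        then have "X (Suc i) \<le> X j" using monoQ[of "Suc i" j] allQ ij by auto
        then show ?thesis by simp
      next
        case False
        then have "j < i" using ij by simp
        then have "X (Suc j) \<le> X i" using monoQ[of "Suc j" i] allQ ij by auto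
        then show ?thesis by simp
      qed
    qed
    have "(\<Sum>j<N. \<bar>f (X (Suc j)) - f (X j)\<bar> powr p) \<in> psums p N f"
      unfolding psums_def mem_Collect_eq
      by (rule exI[where x=X], rule exI[where x="\<lambda>j. X (Suc j)"], intro conjI refl fam)
    then have le: "(\<Sum>j<N. \<bar>f (X (Suc j)) - f (X j)\<bar> powr p) \<le> Sup (psums p N f)"
      using bddN by (rule cSup_upper)
    have "(\<Sum>j<N. d powr p) \<le> (\<Sum>j<N. \<bar>f (X (Suc j)) - f (X j)\<bar> powr p)"
    proof (rule sum_mono)
      fix j assume "j \<in> {..<N}"
      then have "d \<le> \<bar>f (X (Suc j)) - f (X j)\<bar>" using step allQ by auto
      then show "d powr p \<le> \<bar>f (X (Suc j)) - f (X j)\<bar> powr p"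
        using d p by (intro powr_mono2) auto
    qed
    then show False using le big by simp
  qed
  define K where "K = (LEAST k. \<not> Q k)"
  have notQK: "\<not> Q K" unfolding K_def using \<open>\<exists>k<N. \<not> Q k\<close> by (metis LeastI)
  have KN: "K < N" unfolding K_def using \<open>\<exists>k<N. \<not> Q k\<close> by (meson Least_le le_less_trans)
  have QbK: "\<forall>j<K. Q j" unfolding K_def using not_less_Least by blast
  have XK: "X K \<in> {0..1}"
  proof (cases K)
    case 0 then show ?thesis using X0 by simp
  next
    case (Suc j)
    then have "Q j" using QbK by simp
    then show ?thesis using step[of j] Suc by simp
  qed
  have AK: "Aset f d (X K) = {}" using notQK XK unfolding Q_def by simp
  have monoK: "X i \<le> X j" if "i \<le> j" "j \<le> K" for i j
    using monoQ[of i j] that QbK by auto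
  have XinK: "X j \<in> {0..1}" if "j \<le> K" for j
  proof (cases "j = K")
    case True then show ?thesis using XK by simp
  next
    case False then show ?thesis using QbK that unfolding Q_def by auto
  qed
  define idx where "idx y = Max {k. k \<le> K \<and> X k \<le> y}" for y
  have fin: "finite {k. k \<le> K \<and> X k \<le> y}" for y by simp
  have ne: "{k. k \<le> K \<and> X k \<le> y} \<noteq> {}" if "y \<in> {0..1}" for y
    using that X0 by (auto intro!: exI[of _ 0])
  have idx1: "idx y \<le> K \<and> X (idx y) \<le> y" if "y \<in> {0..1}" for y
    using Max_in[OF fin ne[OF that]] unfolding idx_def by auto
  have idx2: "y < X (Suc (idx y))" if "y \<in> {0..1}" "idx y < K" for y
  proof (rule ccontr)
    assume "\<not> y < X (Suc (idx y))"
    then have "Suc (idx y) \<in> {k. k \<le> K \<and> X k \<le> y}" using that by auto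
    then have "Suc (idx y) \<le> idx y" unfolding idx_def by (rule Max_ge[OF fin])
    then show False by simp
  qed
  have idxmono: "idx y \<le> idx z" if "y \<in> {0..1}" "y \<le> z" for y z
    unfolding idx_def using that ne[OF that(1)] by (intro Max_mono) auto
  define g where "g y = f (X (idx y))" for y
  have approx: "\<bar>f x - g x\<bar> \<le> d" if x: "x \<in> {0..1}" for x
  proof (cases "idx x < K")
    case True
    then have "Q (idx x)" using QbK by simp
    then have q: "X (idx x) \<in> {0..1}" "Aset f d (X (idx x)) \<noteq> {}" unfolding Q_def by auto
    have "\<bar>f x - f (X (idx x))\<bar> < d"
      using nxt_props(3)[OF cont d q] idx1[OF x] idx2[OF x True] XS by simp
    then show ?thesis unfolding g_def by simp
  next
    case False
    then have "idx x = K" using idx1[OF x] by simp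
    then have "x \<notin> Aset f d (X K)" using AK by simp
    then have "\<bar>f x - f (X K)\<bar> < d" using idx1[OF x] x \<open>idx x = K\<close> unfolding Aset_def by auto
    then show ?thesis unfolding g_def using \<open>idx x = K\<close> by simp
  qed
  have varb: "(\<Sum>j<n. \<bar>g (b j) - g (a j)\<bar> powr p) \<le> Sup (psums p N f)"
    if ab: "nonoverlapping_family n a b" for n a b
  proof -
    have ab01: "a j \<in> {0..1}" "b j \<in> {0..1}" "a j \<le> b j" if "j < n" for j
      using ab that unfolding nonoverlapping_family_def by auto
    have idxle: "idx (a j) \<le> idx (b j)" if "j < n" for j
      using idxmono ab01[OF that] by auto
    define J where "J = {j. j < n \<and> idx (a j) < idx (b j)}"
    have Jsub: "J \<subseteq> {..<n}" unfolding J_def by auto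
    have inj: "inj_on (\<lambda>j. idx (a j)) J"
    proof (rule inj_onI)
      fix i j assume i: "i \<in> J" and j: "j \<in> J" and eq: "idx (a i) = idx (a j)"
      show "i = j"
      proof (rule ccontr)
        assume "i \<noteq> j"
        then have "b i \<le> a j \<or> b j \<le> a i" using ab i j unfolding nonoverlapping_family_def J_def by auto
        then show False
        proof
          assume "b i \<le> a j"
          then have "idx (b i) \<le> idx (a j)" using idxmono ab01 i unfolding J_def by auto
          then show False using eq i unfolding J_def by simp
        next
          assume "b j \<le> a i"
          then have "idx (b j) \<le> idx (a i)" using idxmono ab01 j unfolding J_def by auto
          then show False using eq j unfolding J_def by simp
        qed
      qed
    qed
    have img: "(\<lambda>j. idx (a j)) ` J \<subseteq> {..<K}"
    proof
      fix k assume "k \<in> (\<lambda>j. idx (a j)) ` J"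
      then obtain j where j: "j \<in> J" "k = idx (a j)" by auto
      then have "idx (b j) \<le> K" using idx1 ab01 unfolding J_def by auto
      then show "k \<in> {..<K}" using j unfolding J_def by auto
    qed
    have "card J = card ((\<lambda>j. idx (a j)) ` J)" using inj by (simp add: card_image)
    also have "\<dots> \<le> card {..<K}" using img by (intro card_mono) auto
    finally have cJ: "card J \<le> N" using KN by simp
    define a' where "a' j = (if j \<in> J then X (idx (a j)) else 0)" for j
    define b' where "b' j = (if j \<in> J then X (idx (b j)) else 0)" for j
    have a'0: "0 \<le> a' j" for j
    proof (cases "j \<in> J")
      case True
      then have "j < n" unfolding J_def by simp
      then show ?thesis using True XinK idx1 ab01 unfolding a'_def by auto
    qed (simp add: a'_def)
    have fam': "nonoverlapping_family n a' b'"
      unfolding nonoverlapping_family_def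
    proof (rule conjI; intro allI impI)
      fix j assume "j < n"
      show "0 \<le> a' j \<and> a' j \<le> b' j \<and> b' j \<le> 1"
      proof (cases "j \<in> J")
        case True
        have "idx (a j) \<le> idx (b j)" "idx (b j) \<le> K" using idxle idx1 ab01 \<open>j < n\<close> by auto
        then have "X (idx (a j)) \<le> X (idx (b j))" "X (idx (b j)) \<le> 1"
          using monoK XinK by auto
        then show ?thesis using a'0[of j] True unfolding a'_def b'_def by auto
      next
        case False then show ?thesis unfolding a'_def b'_def by simp
      qed
    next
      fix i j assume ij: "i < n" "j < n" "i \<noteq> j"
      show "b' i \<le> a' j \<or> b' j \<le> a' i"
      proof (cases "i \<in> J \<and> j \<in> J")
        case True
        have "b i \<le> a j \<or> b j \<le> a i" using ab ij unfolding nonoverlapping_family_def by auto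
        then have "idx (b i) \<le> idx (a j) \<or> idx (b j) \<le> idx (a i)"
          using idxmono ab01 ij by auto
        moreover have "idx (a j) \<le> K" "idx (a i) \<le> K" using idx1 ab01 ij by auto
        ultimately have "X (idx (b i)) \<le> X (idx (a j)) \<or> X (idx (b j)) \<le> X (idx (a i))"
          using monoK by auto
        then show ?thesis using True unfolding a'_def b'_def by simp
      next
        case False
        then have "b' i = 0 \<or> b' j = 0" unfolding b'_def by auto
        then show ?thesis using a'0[of i] a'0[of j] by auto
      qed
    qed
    have "(\<Sum>j<n. \<bar>g (b j) - g (a j)\<bar> powr p) =
          (\<Sum>j\<in>{..<n} - J. \<bar>g (b j) - g (a j)\<bar> powr p) + (\<Sum>j\<in>J. \<bar>g (b j) - g (a j)\<bar> powr p)"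
      using Jsub by (intro sum.subset_diff) auto
    also have "(\<Sum>j\<in>{..<n} - J. \<bar>g (b j) - g (a j)\<bar> powr p) = 0"
    proof (rule sum.neutral, rule ballI)
      fix j assume "j \<in> {..<n} - J"
      then have "idx (a j) = idx (b j)" using idxle unfolding J_def by force
      then show "\<bar>g (b j) - g (a j)\<bar> powr p = 0" unfolding g_def by simp
    qed
    also have "(\<Sum>j\<in>J. \<bar>g (b j) - g (a j)\<bar> powr p) = (\<Sum>j\<in>J. \<bar>f (b' j) - f (a' j)\<bar> powr p)"
      unfolding g_def a'_def b'_def by (intro sum.cong) auto
    finally have eqs: "(\<Sum>j<n. \<bar>g (b j) - g (a j)\<bar> powr p) = (\<Sum>j\<in>J. \<bar>f (b' j) - f (a' j)\<bar> powr p)"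
      by simp
    have "(\<Sum>j\<in>J. \<bar>f (b' j) - f (a' j)\<bar> powr p) \<in> psums p N f"
      by (rule pad_family[OF fam' Jsub cJ])
    then show ?thesis unfolding eqs using bddN by (rule cSup_upper)
  qed
  have ub: "s \<le> Sup (psums p N f)" if "s \<in> (\<Union>n. psums p n g)" for s
    using that varb unfolding psums_def by auto
  have "g \<in> BVp p" unfolding BVp_def bdd_above_def using ub by blast
  moreover have "Sup (\<Union>n. psums p n g) \<le> Sup (psums p N f)"
  proof (rule cSup_least)
    show "(\<Union>n. psums p n g) \<noteq> {}" using zero_in_psums[of p 0 g] by blast
  qed (rule ub)
  ultimately show ?thesis using approx by blast
qed

lemma lower_main:
  fixes f g :: "real \<Rightarrow> real" and p :: real and n :: nat
  assumes cont: "continuous_on {0..1} f" and p: "1 \<le> p" and g: "g \<in> BVp p"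
  shows "0 \<le> Linf_norm (\<lambda>x. f x - g x) \<and>
    Sup (psums p n f) \<le> 2 powr p * (Sup (\<Union>n. psums p n g) + real n * (2 * Linf_norm (\<lambda>x. f x - g x)) powr p)"
proof -
  define L where "L = Linf_norm (\<lambda>x. f x - g x)"
  define Sg where "Sg = Sup (\<Union>n. psums p n g)"
  define B where "B = 2 powr p * (Sg + real n * (2 * L) powr p)"
  obtain Mf where Mf: "\<forall>x\<in>{0..1}. \<bar>f x\<bar> \<le> Mf" using cont_bdd[OF cont] by blast
  obtain Mg where Mg: "\<forall>x\<in>{0..1}. \<bar>g x\<bar> \<le> Mg" using BVp_bdd[OF g p] by blast
  have hb: "\<bar>f x - g x\<bar> \<le> max 0 (Mf + Mg)" if "x \<in> {0..1}" for x
    using Mf Mg that by (smt (verit))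
  have LA: "0 \<le> L \<and> (AE x in lebesgue. x \<in> {0..1} \<longrightarrow> \<bar>f x - g x\<bar> \<le> L)"
    unfolding L_def by (rule Linf_attained[of "max 0 (Mf + Mg)"]) (use hb in auto)
  then have L0: "0 \<le> L" and AEL: "AE x in lebesgue. x \<in> {0..1} \<longrightarrow> \<bar>f x - g x\<bar> \<le> L" by auto
  have bddg: "bdd_above (\<Union>n. psums p n g)" using g unfolding BVp_def by simp
  have "\<forall>k x. \<exists>y. x \<in> {0..1} \<longrightarrow> (y \<in> {0..1} \<and> \<bar>y - x\<bar> < 1 / real (Suc k) \<and> \<bar>f y - g y\<bar> \<le> L)"
  proof (intro allI)
    fix k x
    show "\<exists>y. x \<in> {0..1} \<longrightarrow> (y \<in> {0..1} \<and> \<bar>y - x\<bar> < 1 / real (Suc k) \<and> \<bar>f y - g y\<bar> \<le> L)"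
    proof (cases "x \<in> {0..1}")
      case True
      have "0 < 1 / real (Suc k)" by simp
      from AE_dense[OF AEL True this] show ?thesis by blast
    qed blast
  qed
  then obtain u where u: "\<And>k x. x \<in> {0..1} \<Longrightarrow> u k x \<in> {0..1} \<and> \<bar>u k x - x\<bar> < 1 / real (Suc k) \<and> \<bar>f (u k x) - g (u k x)\<bar> \<le> L"
    by metis
  have conv: "(\<lambda>k. u k x) \<longlonglongrightarrow> x" if x: "x \<in> {0..1}" for x
    unfolding LIMSEQ_iff
  proof (intro allI impI)
    fix r :: real assume "0 < r"
    then obtain no where no: "inverse (real (Suc no)) < r" using reals_Archimedean by blast
    have "norm (u k x - x) < r" if "no \<le> k" for k
    proof -
      have "\<bar>u k x - x\<bar> < 1 / real (Suc k)" using u[OF x] by blast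
      also have "\<dots> \<le> 1 / real (Suc no)" using that by (intro divide_left_mono) auto
      also have "\<dots> < r" using no by (simp add: inverse_eq_divide)
      finally show ?thesis by simp
    qed
    then show "\<exists>no. \<forall>k\<ge>no. norm (u k x - x) < r" by blast
  qed
  have ordev: "eventually (\<lambda>k. u k x \<le> u k y) sequentially" if "x \<in> {0..1}" "y \<in> {0..1}" "x \<le> y" for x y
  proof (cases "x = y")
    case True then show ?thesis by simp
  next
    case False
    then have xy: "x < (x + y) / 2" "(x + y) / 2 < y" using that by auto
    have "eventually (\<lambda>k. u k x < (x + y) / 2) sequentially"
      using order_tendstoD(2)[OF conv[OF that(1)] xy(1)] .
    moreover have "eventually (\<lambda>k. (x + y) / 2 < u k y) sequentially"
      using order_tendstoD(1)[OF conv[OF that(2)] xy(2)] .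
    ultimately show ?thesis by eventually_elim simp
  qed
  have fcomp: "(\<lambda>k. f (u k x)) \<longlonglongrightarrow> f x" if x: "x \<in> {0..1}" for x
    by (rule continuous_on_tendsto_compose[OF cont conv[OF x] x]) (use u x in simp)
  have bound_k: "(\<Sum>j<n. \<bar>f (u k (b j)) - f (u k (a j))\<bar> powr p) \<le> B"
    if fam: "nonoverlapping_family n (\<lambda>j. u k (a j)) (\<lambda>j. u k (b j))" and ab: "nonoverlapping_family n a b" for k a b
  proof -
    have ab01: "a j \<in> {0..1}" "b j \<in> {0..1}" if "j < n" for j
      using ab that unfolding nonoverlapping_family_def by auto
    have tm: "\<bar>f (u k (b j)) - f (u k (a j))\<bar> powr p \<le>
       2 powr p * (\<bar>g (u k (b j)) - g (u k (a j))\<bar> powr p + (2 * L) powr p)" if j: "j < n" for j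
    proof -
      have "\<bar>f (u k (b j)) - g (u k (b j))\<bar> \<le> L" "\<bar>f (u k (a j)) - g (u k (a j))\<bar> \<le> L"
        using u ab01[OF j] by auto
      then have "\<bar>f (u k (b j)) - f (u k (a j))\<bar> \<le> \<bar>g (u k (b j)) - g (u k (a j))\<bar> + 2 * L"
        by linarith
      then have "\<bar>f (u k (b j)) - f (u k (a j))\<bar> powr p \<le> (\<bar>g (u k (b j)) - g (u k (a j))\<bar> + 2 * L) powr p"
        using p by (intro powr_mono2) auto
      also have "\<dots> \<le> 2 powr p * (\<bar>g (u k (b j)) - g (u k (a j))\<bar> powr p + (2 * L) powr p)"
        using L0 p by (intro powr_sum_le) auto
      finally show ?thesis .
    qed
    have "(\<Sum>j<n. \<bar>f (u k (b j)) - f (u k (a j))\<bar> powr p) \<le>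
          (\<Sum>j<n. 2 powr p * (\<bar>g (u k (b j)) - g (u k (a j))\<bar> powr p + (2 * L) powr p))"
      using tm by (intro sum_mono) auto
    also have "\<dots> = 2 powr p * ((\<Sum>j<n. \<bar>g (u k (b j)) - g (u k (a j))\<bar> powr p) + real n * (2 * L) powr p)"
      by (simp add: sum_distrib_left[symmetric] sum.distrib)
    also have "\<dots> \<le> B"
    proof -
      have "(\<Sum>j<n. \<bar>g (u k (b j)) - g (u k (a j))\<bar> powr p) \<in> psums p n g"
        unfolding psums_def mem_Collect_eq
        by (rule exI[where x="\<lambda>j. u k (a j)"], rule exI[where x="\<lambda>j. u k (b j)"], intro conjI refl fam)
      then have "(\<Sum>j<n. \<bar>g (u k (b j)) - g (u k (a j))\<bar> powr p) \<in> (\<Union>n. psums p n g)" by blast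
      then have "(\<Sum>j<n. \<bar>g (u k (b j)) - g (u k (a j))\<bar> powr p) \<le> Sg"
        unfolding Sg_def using bddg by (rule cSup_upper)
      then show ?thesis unfolding B_def by (intro mult_left_mono) auto
    qed
    finally show ?thesis .
  qed
  have sB: "s \<le> B" if s: "s \<in> psums p n f" for s
  proof -
    obtain a b where ab: "nonoverlapping_family n a b" and s: "s = (\<Sum>j<n. \<bar>f (b j) - f (a j)\<bar> powr p)"
      using \<open>s \<in> psums p n f\<close> unfolding psums_def by blast
    have ab01: "a j \<in> {0..1}" "b j \<in> {0..1}" "a j \<le> b j" if "j < n" for j
      using ab that unfolding nonoverlapping_family_def by auto
    have E1: "eventually (\<lambda>k. \<forall>j\<in>{..<n}. u k (a j) \<le> u k (b j)) sequentially"
      by (rule eventually_ball_finite) (use ordev ab01 in auto)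
    have E2: "eventually (\<lambda>k. \<forall>i\<in>{..<n}. \<forall>j\<in>{..<n}. i \<noteq> j \<longrightarrow> u k (b i) \<le> u k (a j) \<or> u k (b j) \<le> u k (a i)) sequentially"
    proof (rule eventually_ball_finite, simp, intro ballI, rule eventually_ball_finite, simp, intro ballI)
      fix i j assume i: "i \<in> {..<n}" and j: "j \<in> {..<n}"
      show "eventually (\<lambda>k. i \<noteq> j \<longrightarrow> u k (b i) \<le> u k (a j) \<or> u k (b j) \<le> u k (a i)) sequentially"
      proof (cases "i = j")
        case True then show ?thesis by simp
      next
        case False
        then have "b i \<le> a j \<or> b j \<le> a i" using ab i j unfolding nonoverlapping_family_def by auto
        then show ?thesis
        proof
          assume "b i \<le> a j"
          then have "eventually (\<lambda>k. u k (b i) \<le> u k (a j)) sequentially" using ordev ab01 i j by auto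
          then show ?thesis by eventually_elim simp
        next
          assume "b j \<le> a i"
          then have "eventually (\<lambda>k. u k (b j) \<le> u k (a i)) sequentially" using ordev ab01 i j by auto
          then show ?thesis by eventually_elim simp
        qed
      qed
    qed
    have EF: "eventually (\<lambda>k. nonoverlapping_family n (\<lambda>j. u k (a j)) (\<lambda>j. u k (b j))) sequentially"
      using E1 E2
    proof eventually_elim
      case (elim k)
      show ?case unfolding nonoverlapping_family_def
        using elim u ab01 by auto
    qed
    have EB: "eventually (\<lambda>k. (\<Sum>j<n. \<bar>f (u k (b j)) - f (u k (a j))\<bar> powr p) \<le> B) sequentially"
      using EF by eventually_elim (rule bound_k[OF _ ab])
    have lim: "(\<lambda>k. \<Sum>j<n. \<bar>f (u k (b j)) - f (u k (a j))\<bar> powr p) \<longlonglongrightarrow> s"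
      unfolding s
    proof (rule tendsto_sum)
      fix j assume "j \<in> {..<n}"
      then have "j < n" by simp
      have "(\<lambda>k. \<bar>f (u k (b j)) - f (u k (a j))\<bar>) \<longlonglongrightarrow> \<bar>f (b j) - f (a j)\<bar>"
        by (intro tendsto_intros fcomp ab01[OF \<open>j < n\<close>])
      then show "(\<lambda>k. \<bar>f (u k (b j)) - f (u k (a j))\<bar> powr p) \<longlonglongrightarrow> \<bar>f (b j) - f (a j)\<bar> powr p"
        using p by (intro tendsto_powr') auto
    qed
    show ?thesis using tendsto_upperbound[OF lim EB trivial_limit_sequentially] .
  qed
  have "Sup (psums p n f) \<le> B"
    using zero_in_psums[of p n f] sB by (intro cSup_least) auto
  then show ?thesis using L0 unfolding B_def Sg_def L_def by simp
qed

lemma zero_BVp: "(\<lambda>_. 0::real) \<in> BVp p"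
proof -
  have "s \<le> 0" if "s \<in> (\<Union>n. psums p n (\<lambda>_. 0::real))" for s
    using that unfolding psums_def by auto
  then show ?thesis unfolding BVp_def bdd_above_def by blast
qed

theorem theorem4p2:
  fixes p :: real
  assumes "1 \<le> p"
  shows "\<exists>c1 c2. 0 < c1 \<and> c1 \<le> c2 \<and>
    (\<forall>f :: real \<Rightarrow> real. continuous_on {0..1} f \<longrightarrow>
      (\<forall>t::real. 0 < t \<and> t \<le> 1 \<longrightarrow>
        (let n = nat \<lfloor>(real_of_int \<lfloor>1 / t\<rfloor>) powr p\<rfloor> in
          c1 * t * modulus_pvar p n f \<le> K_func p f t \<and>
          K_func p f t \<le> c2 * t * modulus_pvar p n f)))"
proof (rule exI[of _ "1/8"], rule exI[of _ 9], intro conjI allI impI)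
  show "0 < (1/8::real)" by simp
  show "1/8 \<le> (9::real)" by simp
  fix f :: "real \<Rightarrow> real" and t :: real
  assume cont: "continuous_on {0..1} f" and t: "0 < t \<and> t \<le> 1"
  have p0: "0 < p" using assms by simp
  define m where "m = real_of_int \<lfloor>1 / t\<rfloor>"
  define n where "n = nat \<lfloor>m powr p\<rfloor>"
  have t1: "1 \<le> 1 / t" using t by (simp add: field_simps)
  have m1: "1 \<le> m" unfolding m_def using t1 by (simp add: one_le_floor)
  have mt: "m \<le> 1 / t" unfolding m_def by simp
  have mt2: "1 / t < m + 1" unfolding m_def by linarith
  have tm1: "t * m \<le> 1" using mt t by (simp add: field_simps)
  have tm2: "1 \<le> 2 * t * m"
  proof -
    have "1 / t < 2 * m" using mt2 m1 by linarith
    then show ?thesis using t by (simp add: field_simps)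
  qed
  have mp1: "1 \<le> m powr p" using m1 p0 by (simp add: ge_one_powr_ge_zero)
  have nle: "real n \<le> m powr p" unfolding n_def using mp1 by simp
  have nlt: "m powr p < real n + 1" unfolding n_def using mp1 by linarith
  have n1: "1 \<le> n" unfolding n_def using mp1 by linarith
  have n2: "m powr p < 2 * real n" using nlt n1 by linarith
  define S where "S = Sup (psums p n f)"
  define V where "V = S powr (1/p)"
  have bddS: "bdd_above (psums p n f)" using psums_bdd[OF cont p0] .
  have S0: "0 \<le> S" unfolding S_def using zero_in_psums bddS by (rule cSup_upper)
  have V0: "0 \<le> V" unfolding V_def by simp
  have VpS: "V powr p = S" unfolding V_def using S0 p0 by (simp add: powr_powr)
  have mod: "modulus_pvar p n f = V" unfolding modulus_pvar_def V_def S_def ..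
  define KS where "KS = {Linf_norm (\<lambda>x. f x - g x) + t * pvar p g | g. g \<in> BVp p}"
  have Kdef: "K_func p f t = Inf KS" unfolding K_func_def KS_def ..
  have KSne: "KS \<noteq> {}" unfolding KS_def using zero_BVp by blast
  have KSnn: "0 \<le> e" if eKS: "e \<in> KS" for e
  proof -
    obtain g where g: "g \<in> BVp p" "e = Linf_norm (\<lambda>x. f x - g x) + t * pvar p g"
      using eKS unfolding KS_def by blast
    have "0 \<le> Linf_norm (\<lambda>x. f x - g x)" using lower_main[OF cont assms g(1)] by blast
    moreover have "0 \<le> pvar p g" unfolding pvar_def by simp
    ultimately show ?thesis using g t by simp
  qed
  have KSbb: "bdd_below KS" unfolding bdd_below_def using KSnn by blast
  have Kle: "K_func p f t \<le> Linf_norm (\<lambda>x. f x - g x) + t * pvar p g" if "g \<in> BVp p" for g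
    unfolding Kdef using KSbb that by (intro cInf_lower) (auto simp: KS_def)
  have greedy': "K_func p f t \<le> d + t * V" if d: "0 < d" "S < real n * d powr p" for d
  proof -
    obtain g where g: "g \<in> BVp p" "\<forall>x\<in>{0..1}. \<bar>f x - g x\<bar> \<le> d"
      "Sup (\<Union>n. psums p n g) \<le> S"
      using greedy[OF cont d(1) assms] d(2) unfolding S_def by blast
    have "Linf_norm (\<lambda>x. f x - g x) \<le> d" using g(2) d(1) by (intro Linf_le) auto
    moreover have "pvar p g \<le> V"
    proof -
      have "0 \<le> Sup (\<Union>n. psums p n g)"
        using g(1) zero_in_psums[of p 0 g] unfolding BVp_def by (intro cSup_upper) auto
      then show ?thesis unfolding pvar_def V_def using g(3) p0 by (intro powr_mono2) auto
    qed
    then have "t * pvar p g \<le> t * V" using t by (intro mult_left_mono) auto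
    ultimately show ?thesis using Kle[OF g(1)] by linarith
  qed
  have low: "1/8 * t * modulus_pvar p n f \<le> K_func p f t"
    unfolding mod Kdef
  proof (rule cInf_greatest[OF KSne])
    fix e assume "e \<in> KS"
    then obtain g where g: "g \<in> BVp p" and e: "e = Linf_norm (\<lambda>x. f x - g x) + t * pvar p g"
      unfolding KS_def by blast
    define L where "L = Linf_norm (\<lambda>x. f x - g x)"
    define Sg where "Sg = Sup (\<Union>n. psums p n g)"
    have LM: "0 \<le> L \<and> S \<le> 2 powr p * (Sg + real n * (2 * L) powr p)"
      using lower_main[OF cont assms g, of n] unfolding L_def Sg_def S_def by blast
    have Sg0: "0 \<le> Sg"
      unfolding Sg_def using g zero_in_psums[of p 0 g] unfolding BVp_def by (intro cSup_upper) auto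
    have L0: "0 \<le> L" using LM by simp
    define Y where "Y = real n * (2 * L) powr p"
    have Y0: "0 \<le> Y" unfolding Y_def by simp
    have "V \<le> (2 powr p * (Sg + Y)) powr (1/p)"
      unfolding V_def Y_def using LM S0 p0 by (intro powr_mono2) auto
    also have "\<dots> = 2 * (Sg + Y) powr (1/p)"
      using p0 Sg0 Y0 by (simp add: powr_mult powr_powr)
    also have "\<dots> \<le> 2 * (2 * (Sg powr (1/p) + Y powr (1/p)))"
      using root_sum_le[OF Sg0 Y0 assms] by simp
    also have "Y powr (1/p) = real n powr (1/p) * (2 * L)"
      unfolding Y_def using p0 L0 by (simp add: powr_mult powr_powr)
    also have "real n powr (1/p) \<le> m"
    proof -
      have "real n powr (1/p) \<le> (m powr p) powr (1/p)" using nle p0 by (intro powr_mono2) auto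
      also have "\<dots> = m" using m1 p0 by (simp add: powr_powr)
      finally show ?thesis .
    qed
    then have "2 * (2 * (Sg powr (1/p) + real n powr (1/p) * (2 * L))) \<le> 2 * (2 * (Sg powr (1/p) + m * (2 * L)))"
      using L0 by (simp add: mult_right_mono)
    finally have VB: "V \<le> 4 * pvar p g + 8 * m * L"
      unfolding pvar_def Sg_def[symmetric] by simp
    have "t * V \<le> t * (4 * pvar p g + 8 * m * L)" using VB t by (intro mult_left_mono) auto
    also have "\<dots> = 4 * (t * pvar p g) + 8 * (t * m) * L" by (simp add: algebra_simps)
    also have "\<dots> \<le> 4 * (t * pvar p g) + 8 * L" using tm1 L0 by (simp add: mult_right_mono)
    finally have "t * V \<le> 4 * (t * pvar p g) + 8 * L" .
    moreover have "0 \<le> t * pvar p g" using t unfolding pvar_def by simp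
    ultimately show "1/8 * t * V \<le> e" unfolding e L_def[symmetric] by simp
  qed
  have up: "K_func p f t \<le> 9 * t * modulus_pvar p n f"
  proof (cases "S = 0")
    case True
    then have "V = 0" unfolding V_def by simp
    have "K_func p f t \<le> 0 + e" if "0 < e" for e
    proof -
      have "0 < real n * e powr p" using n1 that by simp
      then have "K_func p f t \<le> e + t * V" using greedy'[OF that] True by simp
      then show ?thesis using \<open>V = 0\<close> by simp
    qed
    then have "K_func p f t \<le> 0" by (rule field_le_epsilon)
    then show ?thesis using \<open>V = 0\<close> mod by simp
  next
    case False
    then have Spos: "0 < S" using S0 by simp
    then have Vpos: "0 < V" unfolding V_def by simp
    define d where "d = 4 * V / m"
    have dpos: "0 < d" unfolding d_def using Vpos m1 by simp
    have dm: "(m * d) powr p = 4 powr p * S"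
      unfolding d_def using m1 VpS Vpos by (simp add: powr_mult)
    have "4 powr p * S = m powr p * d powr p" using dm m1 dpos by (simp add: powr_mult)
    also have "\<dots> < 2 * real n * d powr p" using n2 dpos by (intro mult_strict_right_mono) auto
    finally have A: "4 powr p * S < 2 * real n * d powr p" .
    have "4 powr 1 \<le> 4 powr p" using assms by (intro powr_mono) auto
    then have "4 * S \<le> 4 powr p * S" using S0 by (intro mult_right_mono) auto
    moreover have "4 powr p * S < 2 * (real n * d powr p)" using A by (simp add: algebra_simps)
    ultimately have "S < real n * d powr p" using Spos by linarith
    then have Kd: "K_func p f t \<le> d + t * V" using greedy'[OF dpos] by simp
    have "d \<le> 8 * t * V"
    proof -
      have "1 * V \<le> (2 * t * m) * V" using tm2 Vpos by (intro mult_right_mono) auto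
      then have "4 * V \<le> 8 * t * V * m" by (simp add: algebra_simps)
      then show ?thesis unfolding d_def using m1 by (simp add: field_simps)
    qed
    then show ?thesis using Kd mod by simp
  qed
  show "let n = nat \<lfloor>(real_of_int \<lfloor>1 / t\<rfloor>) powr p\<rfloor> in
          1/8 * t * modulus_pvar p n f \<le> K_func p f t \<and>
          K_func p f t \<le> 9 * t * modulus_pvar p n f"
    using low up unfolding Let_def n_def m_def by simp
qed

end
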